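(* Let $U$ be a frame-acyclic molecule and $k\in\mathbb{N}$ with $\mathrm{frdim}\,U\le k\le\dim U-1$. Then every $k$-pre-ordering of $U$ is refined by a $k$-ordering of $U$.
   Context: Oriented graded posets: graded posets ($\dim x$ the grade) with, for each $x$, a partition of the elements covered by $x$ into $\partial^-x$ and $\partial^+x$. $\mathrm{cl}\{x\}$ is the downward closure. For closed $U$, $k\ge0$, $\partial_k^\alpha U$ is the downward closure of the $x\in U$ with either $\dim x=k$ and no $y\in U$ with $x\in\partial^{-\alpha}y$, or $x$ maximal with $\dim x<k$. Molecules: smallest isomorphism-closed class containing the point, closed under pasting $U\#_kV$ (pushout along $\partial_k^+U\cong\partial_k^-V$), and containing $U\Rightarrow V$ (pushout along $\partial_{m-1}U\cong\partial_{m-1}V$ plus a new top element with inputs the maximal elements of $U$, outputs those of $V$) for round $U,V$ of equal dimension $m$ with matching $(m-1)$-boundaries ($U$ round iff $\partial_{k-1}U=\partial_k^-U\cap\partial_k^+U$ for $k<\dim U$). Submolecules $V\sqsubseteq U$: smallest class of embeddings containing isomorphisms, closed under composition, containing $U\hookrightarrow U\#_kV\hookleftarrow V$. $\mathrm{frdim}\,V$ is the dimension of $\bigcup\{\mathrm{cl}\{x\}\cap\mathrm{cl}\{y\}:x\ne y\text{ maximal in }V\}$; for $k\ge-1$, $\mathcal{M}_kV$ is the directed graph whose vertices are the maximal elements of $V$ of dimension $>k$, with an edge $x\to y$ iff some $k$-dimensional element lies in $\partial_k^+\mathrm{cl}\{x\}\cap\partial_k^-\mathrm{cl}\{y\}$.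 $U$ is frame-acyclic if $\mathcal{M}_{\mathrm{frdim}W}W$ is acyclic for every $W\sqsubseteq U$. A linearly ordered partition of a set is a partition with a linear order $(E_1,\dots,E_m)$ of its classes. A $k$-pre-ordering of $U$ is a linearly ordered partition of the vertices of $\mathcal{M}_kU$ such that for every edge $x\to y$ the class of $x$ is $\le$ the class of $y$; a $k$-ordering is a $k$-pre-ordering all of whose classes are singletons. $L$ refines $K$ if each class of $K$ is the union of a block of consecutive classes of $L$, in order. *)

theory Defs
  imports Main
begin

datatype orient = Mn | Pl

fun opp :: "orient \<Rightarrow> orient" where
  "opp Mn = Pl" | "opp Pl = Mn"

text \<open>An oriented graded poset: a carrier set, the grading (dimension) and for each
  element its input (Mn) and output (Pl) faces; the order is generated by the faces.\<close>
record 'a ogpos =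
  elems :: "'a set"
  gdim :: "'a \<Rightarrow> nat"
  bd :: "orient \<Rightarrow> 'a \<Rightarrow> 'a set"

definition faces :: "('a, 'b) ogpos_scheme \<Rightarrow> 'a \<Rightarrow> 'a set" where
  "faces P x = bd P Mn x \<union> bd P Pl x"

definition ogpos :: "('a, 'b) ogpos_scheme \<Rightarrow> bool" where
  "ogpos P \<longleftrightarrow> (\<forall>x\<in>elems P.
      faces P x \<subseteq> elems P \<and> bd P Mn x \<inter> bd P Pl x = {} \<and>
      (\<forall>y\<in>faces P x. gdim P x = Suc (gdim P y)) \<and>
      (0 < gdim P x \<longrightarrow> faces P x \<noteq> {}))"

definition facerel :: "('a, 'b) ogpos_scheme \<Rightarrow> ('a \<times> 'a) set" where
  "facerel P = {(y, x). x \<in> elems P \<and> y \<in> faces P x}"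

definition cl :: "('a, 'b) ogpos_scheme \<Rightarrow> 'a set \<Rightarrow> 'a set" where
  "cl P A = {y \<in> elems P. \<exists>x \<in> A \<inter> elems P. (y, x) \<in> (facerel P)\<^sup>*}"

definition closed_in :: "('a, 'b) ogpos_scheme \<Rightarrow> 'a set \<Rightarrow> bool" where
  "closed_in P U \<longleftrightarrow> U \<subseteq> elems P \<and> cl P U = U"

definition maxel :: "('a, 'b) ogpos_scheme \<Rightarrow> 'a set \<Rightarrow> 'a set" where
  "maxel P U = {x \<in> U. \<forall>y \<in> U. (x, y) \<in> (facerel P)\<^sup>* \<longrightarrow> y = x}"

definition setdim :: "('a, 'b) ogpos_scheme \<Rightarrow> 'a set \<Rightarrow> int" where
  "setdim P U = (if U = {} then -1 else Max ((\<lambda>x. int (gdim P x)) ` U))"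

definition bdry :: "('a, 'b) ogpos_scheme \<Rightarrow> nat \<Rightarrow> orient \<Rightarrow> 'a set \<Rightarrow> 'a set" where
  "bdry P k \<alpha> U = cl P {x \<in> U.
      (gdim P x = k \<and> \<not> (\<exists>y \<in> U. x \<in> bd P (opp \<alpha>) y)) \<or>
      (x \<in> maxel P U \<and> gdim P x < k)}"

definition bdry_all :: "('a, 'b) ogpos_scheme \<Rightarrow> nat \<Rightarrow> 'a set \<Rightarrow> 'a set" where
  "bdry_all P k U = bdry P k Mn U \<union> bdry P k Pl U"

definition round_in :: "('a, 'b) ogpos_scheme \<Rightarrow> 'a set \<Rightarrow> bool" where
  "round_in P U \<longleftrightarrow> (\<forall>k::nat. int k < setdim P U \<longrightarrow>
      bdry P k Mn U \<inter> bdry P k Pl U = (if k = 0 then {} else bdry_all P (k - 1) U))"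

definition round :: "('a, 'b) ogpos_scheme \<Rightarrow> bool" where
  "round P \<longleftrightarrow> round_in P (elems P)"

definition emb :: "('a \<Rightarrow> 'c) \<Rightarrow> 'a ogpos \<Rightarrow> 'c ogpos \<Rightarrow> bool" where
  "emb f P Q \<longleftrightarrow> inj_on f (elems P) \<and> f ` elems P \<subseteq> elems Q \<and>
     (\<forall>x \<in> elems P. gdim Q (f x) = gdim P x \<and> (\<forall>\<alpha>. bd Q \<alpha> (f x) = f ` bd P \<alpha> x))"

definition iso :: "('a \<Rightarrow> 'c) \<Rightarrow> 'a ogpos \<Rightarrow> 'c ogpos \<Rightarrow> bool" where
  "iso f P Q \<longleftrightarrow> emb f P Q \<and> f ` elems P = elems Q"

text \<open>W (with the maps i, j) is a pasting \<open>U #_k V\<close>: the pushout of U and V along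
  an isomorphism \<open>\<partial>_k^+ U \<cong> \<partial>_k^- V\<close>.\<close>
definition is_pasting :: "nat \<Rightarrow> 'a ogpos \<Rightarrow> 'a ogpos \<Rightarrow> 'a ogpos \<Rightarrow> ('a \<Rightarrow> 'a) \<Rightarrow> ('a \<Rightarrow> 'a) \<Rightarrow> bool" where
  "is_pasting k U V W i j \<longleftrightarrow> emb i U W \<and> emb j V W \<and>
     elems W = i ` elems U \<union> j ` elems V \<and>
     i ` elems U \<inter> j ` elems V = i ` bdry U k Pl (elems U) \<and>
     i ` elems U \<inter> j ` elems V = j ` bdry V k Mn (elems V)"

definition lowbd :: "'a ogpos \<Rightarrow> orient \<Rightarrow> 'a set" where
  "lowbd U \<alpha> = (if setdim U (elems U) \<le> 0 then {}
                 else bdry U (nat (setdim U (elems U)) - 1) \<alpha> (elems U))"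

definition is_rewrite :: "'a ogpos \<Rightarrow> 'a ogpos \<Rightarrow> 'a ogpos \<Rightarrow> ('a \<Rightarrow> 'a) \<Rightarrow> ('a \<Rightarrow> 'a) \<Rightarrow> 'a \<Rightarrow> bool" where
  "is_rewrite U V W i j t \<longleftrightarrow> emb i U W \<and> emb j V W \<and>
     t \<notin> i ` elems U \<union> j ` elems V \<and>
     elems W = insert t (i ` elems U \<union> j ` elems V) \<and>
     i ` elems U \<inter> j ` elems V = i ` (lowbd U Mn \<union> lowbd U Pl) \<and>
     (\<forall>\<alpha>. i ` lowbd U \<alpha> = j ` lowbd V \<alpha>) \<and>
     gdim W t = Suc (nat (setdim U (elems U))) \<and>
     bd W Mn t = i ` maxel U (elems U) \<and>
     bd W Pl t = j ` maxel V (elems V)"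

inductive molecule :: "'a ogpos \<Rightarrow> bool" where
  point: "ogpos P \<Longrightarrow> elems P = {a} \<Longrightarrow> gdim P a = 0 \<Longrightarrow> molecule P"
| isom: "molecule P \<Longrightarrow> ogpos Q \<Longrightarrow> iso f P Q \<Longrightarrow> molecule Q"
| paste: "molecule U \<Longrightarrow> molecule V \<Longrightarrow> ogpos W \<Longrightarrow> is_pasting k U V W i j \<Longrightarrow> molecule W"
| rewr: "molecule U \<Longrightarrow> molecule V \<Longrightarrow> round U \<Longrightarrow> round V \<Longrightarrow>
         setdim U (elems U) = setdim V (elems V) \<Longrightarrow>
         ogpos W \<Longrightarrow> is_rewrite U V W i j t \<Longrightarrow> molecule W"

inductive subm :: "('a \<Rightarrow> 'a) \<Rightarrow> 'a ogpos \<Rightarrow> 'a ogpos \<Rightarrow> bool" where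
  sm_iso: "ogpos P \<Longrightarrow> ogpos Q \<Longrightarrow> iso f P Q \<Longrightarrow> subm f P Q"
| sm_comp: "subm f P Q \<Longrightarrow> subm g Q R \<Longrightarrow> subm (g \<circ> f) P R"
| sm_left: "molecule U \<Longrightarrow> molecule V \<Longrightarrow> ogpos W \<Longrightarrow> is_pasting k U V W i j \<Longrightarrow> subm i U W"
| sm_right: "molecule U \<Longrightarrow> molecule V \<Longrightarrow> ogpos W \<Longrightarrow> is_pasting k U V W i j \<Longrightarrow> subm j V W"

definition submol_set :: "'a ogpos \<Rightarrow> 'a set \<Rightarrow> bool" where
  "submol_set U W \<longleftrightarrow> closed_in U W \<and>
     (\<exists>f. subm f (U\<lparr>elems := W\<rparr>) U \<and> (\<forall>x \<in> W. f x = x))"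

definition frdim :: "('a, 'b) ogpos_scheme \<Rightarrow> 'a set \<Rightarrow> int" where
  "frdim P W = setdim P (\<Union>{cl P {x} \<inter> cl P {y} | x y.
      x \<in> maxel P W \<and> y \<in> maxel P W \<and> x \<noteq> y})"

definition Mvert :: "('a, 'b) ogpos_scheme \<Rightarrow> 'a set \<Rightarrow> int \<Rightarrow> 'a set" where
  "Mvert P W k = {x \<in> maxel P W. k < int (gdim P x)}"

definition Medge :: "('a, 'b) ogpos_scheme \<Rightarrow> 'a set \<Rightarrow> int \<Rightarrow> ('a \<times> 'a) set" where
  "Medge P W k = {(x, y). x \<in> Mvert P W k \<and> y \<in> Mvert P W k \<and>
      (\<exists>z. int (gdim P z) = k \<and>
           z \<in> bdry P (nat k) Pl (cl P {x}) \<inter> bdry P (nat k) Mn (cl P {y}))}"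

definition frame_acyclic :: "'a ogpos \<Rightarrow> bool" where
  "frame_acyclic U \<longleftrightarrow> (\<forall>W. submol_set U W \<longrightarrow> acyclic (Medge U W (frdim U W)))"

text \<open>linearly ordered partition of V, as a list of classes\<close>
definition lin_part :: "'a set list \<Rightarrow> 'a set \<Rightarrow> bool" where
  "lin_part Es V \<longleftrightarrow> (\<forall>E \<in> set Es. E \<noteq> {}) \<and>
     (\<forall>i < length Es. \<forall>j < length Es. i \<noteq> j \<longrightarrow> Es ! i \<inter> Es ! j = {}) \<and>
     \<Union>(set Es) = V"

definition k_pre_ordering :: "'a ogpos \<Rightarrow> nat \<Rightarrow> 'a set list \<Rightarrow> bool" where
  "k_pre_ordering U k Es \<longleftrightarrow> lin_part Es (Mvert U (elems U) (int k)) \<and>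
     (\<forall>x y i j. (x, y) \<in> Medge U (elems U) (int k) \<longrightarrow> i < length Es \<longrightarrow> j < length Es \<longrightarrow>
        x \<in> Es ! i \<longrightarrow> y \<in> Es ! j \<longrightarrow> i \<le> j)"

definition k_ordering :: "'a ogpos \<Rightarrow> nat \<Rightarrow> 'a set list \<Rightarrow> bool" where
  "k_ordering U k Es \<longleftrightarrow> k_pre_ordering U k Es \<and> (\<forall>E \<in> set Es. \<exists>x. E = {x})"

definition refines :: "'a set list \<Rightarrow> 'a set list \<Rightarrow> bool" where
  "refines L K \<longleftrightarrow> (\<exists>Ls. concat Ls = L \<and> length Ls = length K \<and>
     (\<forall>i < length K. K ! i = \<Union>(set (Ls ! i))))"

end

theory Submission imports Defs begin

lemma molecule_ogpos: "molecule U \<Longrightarrow> ogpos U"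
  by (induction rule: molecule.induct) auto

lemma molecule_finite: "molecule U \<Longrightarrow> finite (elems U)"
proof (induction rule: molecule.induct)
  case (isom P Q f) then show ?case by (auto simp: iso_def dest: sym)
next
  case (paste U V W k i j) then show ?case by (simp add: is_pasting_def)
next
  case (rewr U V W i j t) then show ?case by (simp add: is_rewrite_def)
qed auto

lemma submol_self: assumes "molecule U" shows "submol_set U (elems U)"
proof -
  have "closed_in U (elems U)" unfolding closed_in_def cl_def by auto
  moreover have "subm id U U"
    by (rule sm_iso) (auto simp: molecule_ogpos[OF assms] iso_def emb_def)
  ultimately show ?thesis unfolding submol_set_def by (auto intro!: exI[of _ id])
qed

lemma cl_sub: "cl P S \<subseteq> elems P" unfolding cl_def by auto

lemma bdry_cl_sub: "bdry P n a (cl P S) \<subseteq> cl P S"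
  unfolding bdry_def cl_def by (auto intro: rtrancl_trans)

lemma topsort:
  "finite E \<Longrightarrow> acyclic R \<Longrightarrow> \<exists>ys. set ys = E \<and> distinct ys \<and> sorted_wrt (\<lambda>a b. (b,a) \<notin> R) ys"
proof (induction E rule: finite_psubset_induct)
  case (psubset E)
  show ?case
  proof (cases "E = {}")
    case True then show ?thesis by auto
  next
    case False
    then obtain x where x: "x \<in> E" by auto
    have "finite (R \<inter> E \<times> E)" using psubset.hyps by auto
    moreover have "acyclic (R \<inter> E \<times> E)" using psubset.prems acyclic_subset by blast
    ultimately have wf: "wf (R \<inter> E \<times> E)" by (rule finite_acyclic_wf)
    obtain m where m: "m \<in> E" and mmin: "\<And>y. (y, m) \<in> R \<inter> E \<times> E \<Longrightarrow> y \<notin> E"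
      using wfE_min[OF wf x] by metis
    have "E - {m} \<subset> E" using m by auto
    then obtain ys where ys: "set ys = E - {m}" "distinct ys" "sorted_wrt (\<lambda>a b. (b,a) \<notin> R) ys"
      using psubset.IH psubset.prems by blast
    show ?thesis
    proof (rule exI[of _ "m # ys"], intro conjI)
      show "set (m # ys) = E" using ys(1) m by auto
      show "distinct (m # ys)" using ys(1,2) by simp
      have "\<forall>b\<in>set ys. (b, m) \<notin> R"
      proof
        fix b assume "b \<in> set ys"
        then have "b \<in> E" using ys(1) by simp
        then show "(b, m) \<notin> R" using mmin[of b] m by blast
      qed
      then show "sorted_wrt (\<lambda>a b. (b,a) \<notin> R) (m # ys)" using ys(3) by simp
    qed
  qed
qed


lemma set_concat_nth:
  "length yss = length K \<Longrightarrow> \<forall>i<length K. set (yss!i) = K!i \<Longrightarrow> set (concat yss) = \<Union>(set K)"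
proof (induction yss arbitrary: K)
  case Nil then show ?case by simp
next
  case (Cons y ys)
  then obtain E K' where K: "K = E # K'" by (cases K) auto
  have "set y = E" using Cons.prems(2) K by (metis length_Cons nth_Cons_0 zero_less_Suc)
  moreover have "\<forall>i<length K'. set (ys!i) = K'!i"
  proof (intro allI impI)
    fix i assume "i < length K'"
    then show "set (ys!i) = K'!i" using Cons.prems(2)[rule_format, of "Suc i"] K by simp
  qed
  moreover have "length ys = length K'" using Cons.prems(1) K by simp
  ultimately show ?case using Cons.IH[of K'] K by simp
qed

lemma refine_exists:
  assumes "\<forall>E\<in>set K. finite E" "acyclic R"
    "\<forall>i<length K. \<forall>j<length K. i \<noteq> j \<longrightarrow> K!i \<inter> K!j = {}"
    "\<forall>i<length K. \<forall>j<length K. \<forall>x\<in>K!i. \<forall>y\<in>K!j. (y,x) \<in> R \<longrightarrow> j \<le> i"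
  shows "\<exists>yss. length yss = length K \<and> (\<forall>i<length K. set (yss!i) = K!i) \<and>
     distinct (concat yss) \<and> sorted_wrt (\<lambda>a b. (b,a) \<notin> R) (concat yss)"
  using assms
proof (induction K)
  case Nil then show ?case by auto
next
  case (Cons E K)
  have h1: "\<forall>E\<in>set K. finite E" using Cons.prems by auto
  have h3: "\<forall>i<length K. \<forall>j<length K. i \<noteq> j \<longrightarrow> K!i \<inter> K!j = {}"
  proof (intro allI impI)
    fix i j assume "i < length K" "j < length K" "i \<noteq> j"
    then show "K!i \<inter> K!j = {}" using Cons.prems(3)[rule_format, of "Suc i" "Suc j"] by auto
  qed
  have h4: "\<forall>i<length K. \<forall>j<length K. \<forall>x\<in>K!i. \<forall>y\<in>K!j. (y,x) \<in> R \<longrightarrow> j \<le> i"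
  proof (intro allI impI ballI)
    fix i j x y assume "i < length K" "j < length K" "x \<in> K!i" "y \<in> K!j" "(y,x) \<in> R"
    then show "j \<le> i" using Cons.prems(4)[rule_format, of "Suc i" "Suc j" x y] by auto
  qed
  obtain yss where yss: "length yss = length K" "\<forall>i<length K. set (yss!i) = K!i"
     "distinct (concat yss)" "sorted_wrt (\<lambda>a b. (b,a) \<notin> R) (concat yss)"
    using Cons.IH[OF h1 Cons.prems(2) h3 h4] by blast
  obtain ys where ys: "set ys = E" "distinct ys" "sorted_wrt (\<lambda>a b. (b,a) \<notin> R) ys"
    using topsort[of E R] Cons.prems by auto
  have setc: "set (concat yss) = \<Union>(set K)"
  proof -
    show ?thesis using set_concat_nth[OF yss(1,2)] .
  qed
  have disj: "E \<inter> \<Union>(set K) = {}"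
  proof -
    { fix x j assume "x \<in> E" "j < length K" "x \<in> K!j"
      then have False using Cons.prems(3)[rule_format, of 0 "Suc j"] by auto }
    then show ?thesis by (auto simp: in_set_conv_nth)
  qed
  have ord: "\<forall>a\<in>E. \<forall>b\<in>\<Union>(set K). (b,a) \<notin> R"
  proof (intro ballI notI)
    fix a b assume "a \<in> E" "b \<in> \<Union>(set K)" "(b,a) \<in> R"
    then obtain j where "j < length K" "b \<in> K!j" by (auto simp: in_set_conv_nth)
    then show False using Cons.prems(4)[rule_format, of 0 "Suc j" a b] \<open>a \<in> E\<close> \<open>(b,a) \<in> R\<close> by auto
  qed
  show ?case
  proof (rule exI[of _ "ys # yss"], intro conjI)
    show "\<forall>i<length (E # K). set ((ys # yss) ! i) = (E # K) ! i"
      using yss ys by (auto simp: nth_Cons split: nat.split)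
    show "distinct (concat (ys # yss))" using ys yss setc disj by auto
    show "sorted_wrt (\<lambda>a b. (b,a) \<notin> R) (concat (ys # yss))"
      using ys yss setc ord by (auto simp: sorted_wrt_append)
  qed (use yss in auto)
qed

lemma setdim_ge: "finite A \<Longrightarrow> z \<in> A \<Longrightarrow> int (gdim P z) \<le> setdim P A"
  unfolding setdim_def by auto

lemma acyc:
  assumes "molecule U" "frame_acyclic U" "frdim U (elems U) \<le> int k"
  shows "acyclic (Medge U (elems U) (int k) - Id)"
proof (cases "frdim U (elems U) = int k")
  case True
  then show ?thesis using assms(2) submol_self[OF assms(1)] unfolding frame_acyclic_def
    by (metis Diff_subset acyclic_subset)
next
  case False
  have "Medge U (elems U) (int k) - Id = {}"
  proof (rule ccontr)
    assume "Medge U (elems U) (int k) - Id \<noteq> {}"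
    then obtain x y z where xy: "x \<noteq> y" "x \<in> maxel U (elems U)" "y \<in> maxel U (elems U)"
      and z: "int (gdim U z) = int k" "z \<in> bdry U k Pl (cl U {x})" "z \<in> bdry U k Mn (cl U {y})"
      unfolding Medge_def Mvert_def by auto
    have zc: "z \<in> cl U {x} \<inter> cl U {y}" using z bdry_cl_sub by (metis IntI nat_int subsetD)
    let ?A = "\<Union>{cl U {x} \<inter> cl U {y} | x y. x \<in> maxel U (elems U) \<and> y \<in> maxel U (elems U) \<and> x \<noteq> y}"
    have fin: "finite ?A"
      by (rule finite_subset[OF _ molecule_finite[OF assms(1)]], rule Union_least) (use cl_sub in fastforce)
    have "z \<in> ?A" using zc xy by blast
    then have "int (gdim U z) \<le> setdim U ?A" by (rule setdim_ge[OF fin])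
    then have "int k \<le> frdim U (elems U)" using z(1) unfolding frdim_def by simp
    then show False using False assms(3) by simp
  qed
  then show ?thesis unfolding acyclic_def by (metis trancl_empty empty_iff)
qed

theorem mainTheorem13:
  fixes U :: "'a ogpos" and k :: nat and K :: "'a set list"
  assumes "molecule U"
    and "frame_acyclic U"
    and "frdim U (elems U) \<le> int k"
    and "int k \<le> setdim U (elems U) - 1"
    and "k_pre_ordering U k K"
  shows "\<exists>L. k_ordering U k L \<and> refines L K"
proof -
  let ?R = "Medge U (elems U) (int k) - Id"
  let ?V = "Mvert U (elems U) (int k)"
  have ac: "acyclic ?R" using acyc[OF assms(1-3)] .
  have lp: "lin_part K ?V" and po: "\<forall>x y i j. (x, y) \<in> Medge U (elems U) (int k) \<longrightarrow> i < length K \<longrightarrow> j < length K \<longrightarrow>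
        x \<in> K ! i \<longrightarrow> y \<in> K ! j \<longrightarrow> i \<le> j"
    using assms(5) unfolding k_pre_ordering_def by auto
  have finV: "finite ?V"
    by (rule finite_subset[OF _ molecule_finite[OF assms(1)]]) (auto simp: Mvert_def maxel_def)
  have UK: "\<Union>(set K) = ?V" using lp unfolding lin_part_def by auto
  have h1: "\<forall>E\<in>set K. finite E" using UK finV by (metis Sup_upper finite_subset)
  have h3: "\<forall>i<length K. \<forall>j<length K. i \<noteq> j \<longrightarrow> K!i \<inter> K!j = {}"
    using lp unfolding lin_part_def by auto
  have h4: "\<forall>i<length K. \<forall>j<length K. \<forall>x\<in>K!i. \<forall>y\<in>K!j. (y,x) \<in> ?R \<longrightarrow> j \<le> i"
    using po by blast
  obtain yss where yss: "length yss = length K" "\<forall>i<length K. set (yss!i) = K!i"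
     "distinct (concat yss)" "sorted_wrt (\<lambda>a b. (b,a) \<notin> ?R) (concat yss)"
    using refine_exists[OF h1 ac h3 h4] by blast
  define xs where "xs = concat yss"
  define L where "L = map (\<lambda>x. {x}) xs"
  have setxs: "set xs = ?V"
  proof -
    show ?thesis using set_concat_nth[OF yss(1,2)] UK xs_def by simp
  qed
  have dxs: "distinct xs" using yss(3) xs_def by simp
  have sxs: "sorted_wrt (\<lambda>a b. (b,a) \<notin> ?R) xs" using yss(4) xs_def by simp
  have lpL: "lin_part L ?V"
    unfolding lin_part_def
  proof (intro conjI allI impI)
    show "\<forall>E\<in>set L. E \<noteq> {}" unfolding L_def by auto
    fix i j assume "i < length L" "j < length L" "i \<noteq> j"
    then show "L!i \<inter> L!j = {}" unfolding L_def using dxs by (auto simp: nth_eq_iff_index_eq)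
  next
    show "\<Union>(set L) = ?V" unfolding L_def using setxs by auto
  qed
  have poL: "\<forall>x y i j. (x, y) \<in> Medge U (elems U) (int k) \<longrightarrow> i < length L \<longrightarrow> j < length L \<longrightarrow>
        x \<in> L ! i \<longrightarrow> y \<in> L ! j \<longrightarrow> i \<le> j"
  proof (intro allI impI)
    fix x y i j assume e: "(x, y) \<in> Medge U (elems U) (int k)" and ij: "i < length L" "j < length L"
      and xy: "x \<in> L ! i" "y \<in> L ! j"
    have x: "x = xs!i" and y: "y = xs!j" using xy ij unfolding L_def by auto
    show "i \<le> j"
    proof (rule ccontr)
      assume "\<not> i \<le> j"
      then have ji: "j < i" by simp
      then have "x \<noteq> y" using dxs ij x y unfolding L_def by (simp add: nth_eq_iff_index_eq)
      then have "(x, y) \<in> ?R" using e by auto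
      moreover have "(xs!i, xs!j) \<notin> ?R" using sxs ji ij unfolding L_def
        by (simp add: sorted_wrt_iff_nth_less)
      ultimately show False using x y by simp
    qed
  qed
  have "k_ordering U k L"
    unfolding k_ordering_def k_pre_ordering_def using lpL poL unfolding L_def by auto
  moreover have "refines L K"
    unfolding refines_def
  proof (rule exI[of _ "map (map (\<lambda>x. {x})) yss"], intro conjI allI impI)
    show "concat (map (map (\<lambda>x. {x})) yss) = L" unfolding L_def xs_def by (simp add: map_concat)
    show "length (map (map (\<lambda>x. {x})) yss) = length K" using yss by simp
    fix i assume "i < length K"
    then show "K ! i = \<Union>(set (map (map (\<lambda>x. {x})) yss ! i))" using yss by auto
  qed
  ultimately show ?thesis by blast
qed

end
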